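(* Assume $S\times M\neq\emptyset$, let $(x,\lambda):[t_0,+\infty[\ \to X\times Y$ be a solution of (AHT), for each $t\ge t_0$ let $(x_t,\lambda_t)$ be the unique zero of $T_t=T+\varepsilon(t)\mathrm{id}$, suppose there exists $t_+\ge t_0$ such that $\varepsilon^2(t)+\dot\varepsilon(t)\ge0$ and $2\varepsilon(t)\dot\varepsilon(t)+\ddot\varepsilon(t)\le0$ for all $t\ge t_+$, and suppose there exists $\alpha>0$ with $\|T(x,\lambda)-T(\xi,\eta)\|^2\ge\alpha\|(x,\lambda)-(\xi,\eta)\|^2$ for all $(x,\lambda),(\xi,\eta)\in X\times Y$. Then \[ \|(x(t),\lambda(t))-(x_t,\lambda_t)\|^2=\mathcal{O}\big(e^{-2\rho(t)}+\varepsilon^2(t)\big)\quad\text{as } t\to+\infty. \]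
   Context: $X,Y$ are real Hilbert spaces; $X\times Y$ carries the product inner product and norm $\|\cdot\|$. Standing assumptions: $f:X\to\mathbb{R}$ is convex and continuously differentiable with $\nabla f$ Lipschitz continuous on bounded subsets of $X$; $A:X\to Y$ is linear and continuous with adjoint $A^*$; $b\in Y$; $\varepsilon:[t_0,+\infty[\ \to\ ]0,+\infty[$ ($t_0\ge0$) is twice continuously differentiable with $\lim_{t\to+\infty}\varepsilon(t)=0$. $L(x,\lambda)=f(x)+\langle\lambda,Ax-b\rangle_Y$ and $T(x,\lambda)=(\nabla f(x)+A^*\lambda,\ b-Ax)$. $S$ is the set of optimal solutions of $\min\{f(x):Ax=b\}$, $M$ the set of Lagrange multipliers; $S\times M$ is the set of saddle points of $L$, equal to the zero set of $T$. $T_t=T+\varepsilon(t)\mathrm{id}$ has a unique zero $(x_t,\lambda_t)$. $\rho(t)=\int_{t_0}^t\varepsilon(\tau)\,d\tau$. (AHT) is the system $\dot x+\nabla f(x)+A^*\lambda+\varepsilon(t)x=0$, $\dot\lambda+b-Ax+\varepsilon(t)\lambda=0$; a solution is a continuously differentiable $(x,\lambda):[t_0,+\infty[\ \to X\times Y$ satisfying it on $[t_0,+\infty[$ (existence and uniqueness for every initial datum is assumed). *)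

theory Defs
  imports "HOL-Analysis.Analysis" "HOL-Library.Landau_Symbols"
begin

definition opT :: "('a::real_inner \<Rightarrow> 'a) \<Rightarrow> ('a \<Rightarrow> 'b::real_inner) \<Rightarrow> ('b \<Rightarrow> 'a) \<Rightarrow> 'b
      \<Rightarrow> 'a \<times> 'b \<Rightarrow> 'a \<times> 'b" where
  "opT gf A Astar b z = (gf (fst z) + Astar (snd z), b - A (fst z))"

definition opt_sol :: "('a \<Rightarrow> real) \<Rightarrow> ('a \<Rightarrow> 'b) \<Rightarrow> 'b \<Rightarrow> 'a set" where
  "opt_sol f A b = {x. A x = b \<and> (\<forall>y. A y = b \<longrightarrow> f x \<le> f y)}"

definition lagrange_mult :: "('a \<Rightarrow> real) \<Rightarrow> ('a::real_inner \<Rightarrow> 'a) \<Rightarrow> ('a \<Rightarrow> 'b) \<Rightarrow> ('b \<Rightarrow> 'a) \<Rightarrow> 'b \<Rightarrow> 'b set" where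
  "lagrange_mult f gf A Astar b = {l. \<exists>x\<in>opt_sol f A b. gf x + Astar l = 0}"

end

theory Submission
  imports Defs
begin


lemma grad_ineq:
  fixes f :: "'a::real_inner \<Rightarrow> real"
  assumes cv: "convex_on UNIV f" and gr: "\<And>z. (f has_derivative (\<lambda>h. gf z \<bullet> h)) (at z)"
  shows "f y \<ge> f x + gf x \<bullet> (y - x)"
proof -
  define \<phi> where "\<phi> r = f (x + r *\<^sub>R (y - x))" for r :: real
  have "convex_on UNIV \<phi>"
  proof (rule convex_onI)
    fix t a b :: real assume "t > 0" "t < 1"
    have eq: "x + ((1 - t) *\<^sub>R a + t *\<^sub>R b) *\<^sub>R (y - x)
        = (1 - t) *\<^sub>R (x + a *\<^sub>R (y - x)) + t *\<^sub>R (x + b *\<^sub>R (y - x))"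
      by (simp add: algebra_simps)
    show "\<phi> ((1 - t) *\<^sub>R a + t *\<^sub>R b) \<le> (1 - t) * \<phi> a + t * \<phi> b"
      unfolding \<phi>_def eq using convex_onD[OF cv, of t] \<open>t>0\<close> \<open>t<1\<close> by simp
  qed simp
  moreover have "(\<phi> has_field_derivative gf x \<bullet> (y - x)) (at 0)"
  proof -
    have d1: "((\<lambda>r. x + r *\<^sub>R (y - x)) has_derivative (\<lambda>r. r *\<^sub>R (y - x))) (at 0)"
      by (auto intro!: derivative_eq_intros)
    have g: "(f has_derivative (\<lambda>h. gf x \<bullet> h)) (at (x + 0 *\<^sub>R (y - x)))" using gr[of x] by simp
    have "((\<lambda>r. f (x + r *\<^sub>R (y - x))) has_derivative (\<lambda>r. gf x \<bullet> (r *\<^sub>R (y - x)))) (at 0)"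
      using has_derivative_compose[OF d1 g] by simp
    moreover have "(\<lambda>r. r * (gf x \<bullet> (y - x))) = (*) (gf x \<bullet> (y - x))" by (auto simp: fun_eq_iff)
    ultimately show ?thesis unfolding \<phi>_def has_field_derivative_def by simp
  qed
  ultimately have "\<phi> 1 - \<phi> 0 \<ge> gf x \<bullet> (y - x) * (1 - 0)"
    by (intro convex_on_imp_above_tangent[where A=UNIV]) (auto simp: has_field_derivative_def)
  then show ?thesis unfolding \<phi>_def by simp
qed

lemma grad_mono:
  fixes f :: "'a::real_inner \<Rightarrow> real"
  assumes cv: "convex_on UNIV f" and gr: "\<And>z. (f has_derivative (\<lambda>h. gf z \<bullet> h)) (at z)"
  shows "(gf x - gf y) \<bullet> (x - y) \<ge> 0"
proof -
  have "f y \<ge> f x + gf x \<bullet> (y - x)" "f x \<ge> f y + gf y \<bullet> (x - y)"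
    using grad_ineq[OF cv gr] by auto
  then show ?thesis by (simp add: algebra_simps inner_diff_left inner_diff_right)
qed

lemma T_mono:
  assumes gm: "\<And>u v. (gf u - gf v) \<bullet> (u - v) \<ge> (0::real)"
    and A_lin: "linear A" and A_adj: "\<And>u v. A u \<bullet> v = u \<bullet> Astar v"
  shows "(opT gf A Astar b z - opT gf A Astar b w) \<bullet> (z - w) \<ge> 0"
proof -
  obtain x l where z: "z = (x, l)" by fastforce
  obtain x' l' where w: "w = (x', l')" by fastforce
  have "(opT gf A Astar b z - opT gf A Astar b w) \<bullet> (z - w)
     = (gf x - gf x') \<bullet> (x - x') + (Astar l \<bullet> (x - x') - Astar l' \<bullet> (x - x'))
        + (A x' - A x) \<bullet> (l - l')"
    unfolding z w opT_def by (simp add: algebra_simps inner_diff_left inner_diff_right inner_add_left inner_add_right)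
  also have "Astar l \<bullet> (x - x') - Astar l' \<bullet> (x - x') = A (x - x') \<bullet> l - A (x - x') \<bullet> l'"
    using A_adj by (simp add: inner_commute)
  also have "(A x' - A x) = - A (x - x')" using linear_diff[OF A_lin] by simp
  finally show ?thesis using gm[of x x'] by (simp add: inner_diff_right)
qed



lemma deriv_norm2:
  fixes f :: "real \<Rightarrow> 'a::real_inner"
  assumes "(f has_vector_derivative f') (at s)"
  shows "((\<lambda>s. (norm (f s))\<^sup>2) has_real_derivative 2 * (f s \<bullet> f')) (at s)"
proof -
  from assms have d: "(f has_derivative (\<lambda>h. h *\<^sub>R f')) (at s)" by (simp add: has_vector_derivative_def)
  have "((\<lambda>s. f s \<bullet> f s) has_derivative (\<lambda>h. f s \<bullet> (h *\<^sub>R f') + (h *\<^sub>R f') \<bullet> f s)) (at s)"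
    by (rule has_derivative_inner[OF d d])
  moreover have "(\<lambda>h. f s \<bullet> (h *\<^sub>R f') + (h *\<^sub>R f') \<bullet> f s) = (*) (2 * (f s \<bullet> f'))"
    by (auto simp: fun_eq_iff inner_commute algebra_simps)
  ultimately show ?thesis unfolding has_field_derivative_def power2_norm_eq_inner by simp
qed

lemma diffquot:
  fixes z :: "real \<Rightarrow> 'a::real_normed_vector"
  assumes "(z has_vector_derivative v) (at s)"
  shows "((\<lambda>h. (z (s+h) - z s) /\<^sub>R h) \<longlongrightarrow> v) (at 0)"
proof -
  from assms have 1: "(\<lambda>h. norm (z (s + h) - z s - h *\<^sub>R v) / norm h) \<midarrow>0\<rightarrow> 0"
    by (simp add: has_vector_derivative_def has_derivative_at)
  have "eventually (\<lambda>h. norm (z (s + h) - z s - h *\<^sub>R v) / norm h = norm ((z (s+h) - z s) /\<^sub>R h - v)) (at (0::real))"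
  proof -
    have "eventually (\<lambda>h. h \<noteq> (0::real)) (at 0)" by (simp add: eventually_at_filter)
    then show ?thesis
    proof (rule eventually_mono)
      fix h :: real assume h: "h \<noteq> 0"
      have "(z (s+h) - z s) /\<^sub>R h - v = (1/h) *\<^sub>R (z (s + h) - z s - h *\<^sub>R v)"
      proof -
        have "(1/h) *\<^sub>R (z (s + h) - z s - h *\<^sub>R v) = (1/h) *\<^sub>R (z (s + h) - z s) - ((1/h) * h) *\<^sub>R v"
          by (simp add: scaleR_diff_right)
        also have "(1/h) * h = 1" using h by simp
        finally show ?thesis by (simp add: divide_inverse_commute)
      qed
      then show "norm (z (s + h) - z s - h *\<^sub>R v) / norm h = norm ((z (s+h) - z s) /\<^sub>R h - v)"
        by (simp add: divide_inverse mult.commute)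
    qed
  qed
  from tendsto_cong[OF this] 1 have "((\<lambda>h. norm ((z (s+h) - z s) /\<^sub>R h - v)) \<longlongrightarrow> 0) (at 0)" by simp
  then have "((\<lambda>h. (z (s+h) - z s) /\<^sub>R h - v) \<longlongrightarrow> 0) (at 0)" by (rule tendsto_norm_zero_cancel)
  then show ?thesis by (simp add: Lim_null[symmetric])
qed

lemma integral_deriv_at:
  fixes g :: "real \<Rightarrow> real"
  assumes "continuous_on {a..} g" "s > a"
  shows "((\<lambda>u. integral {a..u} g) has_real_derivative g s) (at s)"
proof -
  have "((\<lambda>u. integral {a..u} g) has_real_derivative g s) (at s within {a..s+1})"
    by (rule integral_has_real_derivative) (use assms in \<open>auto intro: continuous_on_subset\<close>)
  moreover have "at s within {a..s+1} = at s"
    by (rule at_within_interior) (use assms in auto)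
  ultimately show ?thesis by simp
qed

lemma within_to_at:
  assumes "(f has_vector_derivative f') (at s within {a..})" "s > (a::real)"
  shows "(f has_vector_derivative f') (at s)"
proof -
  have "at s within {a..} = at s" by (rule at_within_interior) (use assms in auto)
  then show ?thesis using assms by simp
qed

lemma within_to_at_real:
  assumes "(f has_real_derivative f') (at s within {a..})" "s > (a::real)"
  shows "(f has_real_derivative f') (at s)"
proof -
  have "at s within {a..} = at s" by (rule at_within_interior) (use assms in auto)
  then show ?thesis using assms by simp
qed

lemma decr_open:
  fixes g g' :: "real \<Rightarrow> real"
  assumes "\<And>s. s > a \<Longrightarrow> (g has_real_derivative g' s) (at s)" "\<And>s. s > a \<Longrightarrow> g' s \<le> 0"
    "a < u" "u \<le> v"
  shows "g v \<le> g u"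
proof (rule DERIV_nonpos_imp_decreasing_open[OF \<open>u \<le> v\<close>])
  fix x assume "u < x" "x < v"
  then have "a < x" using assms by linarith
  then show "\<exists>y. DERIV g x :> y \<and> y \<le> 0" using assms(1,2) by blast
next
  show "continuous_on {u..v} g"
  proof (intro continuous_at_imp_continuous_on ballI)
    fix x assume "x \<in> {u..v}"
    then have "a < x" using assms by auto
    then show "isCont g x" using assms(1) DERIV_isCont by blast
  qed
qed

lemma key_id:
  fixes z1 z0 :: "'a::real_inner"
  shows "2 * ((z1 - z0) \<bullet> (e1 *\<^sub>R z1 - e0 *\<^sub>R z0)) = (e1+e0) * (norm (z1-z0))\<^sup>2 + (e1-e0)*((norm z1)\<^sup>2 - (norm z0)\<^sup>2)"
  by (simp add: power2_norm_eq_inner inner_diff_left inner_diff_right inner_commute algebra_simps)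



lemma vshift:
  assumes "(f has_vector_derivative f') (at (s + h))"
  shows "((\<lambda>s. f (s + h)) has_vector_derivative f') (at s)"
proof -
  have d: "((\<lambda>s. s + h) has_derivative (\<lambda>x. x)) (at s)" by (auto intro!: derivative_eq_intros)
  have "(f has_derivative (\<lambda>x. x *\<^sub>R f')) (at ((\<lambda>s. s + h) s))"
    using assms by (simp add: has_vector_derivative_def)
  from has_derivative_compose[OF d this] show ?thesis by (simp add: has_vector_derivative_def)
qed

lemma main_ineq:
  fixes D zd1 zd0 Tz1 Tz0 z1 z0 :: "'a::real_inner"
  assumes "zd1 = - (Tz1 + e1 *\<^sub>R z1)" "zd0 = - (Tz0 + e0 *\<^sub>R z0)" "(Tz1 - Tz0) \<bullet> (z1 - z0) \<ge> 0"
    "e1^2 + d1 \<le> e0^2 + d0" "Gam \<ge> 0" "E > 0"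
  shows "E * ((e1 + e0) * ((norm (z1 - z0))\<^sup>2 + (e1 - e0) * Gam))
       + E * (2 * ((z1 - z0) \<bullet> (zd1 - zd0)) + ((d1 - d0) * Gam + (e1 - e0) * ((norm z1)\<^sup>2 - (norm z0)\<^sup>2))) \<le> 0"
proof -
  have "zd1 - zd0 = - (Tz1 - Tz0) - (e1 *\<^sub>R z1 - e0 *\<^sub>R z0)" unfolding assms(1,2) by (simp add: algebra_simps)
  then have "2 * ((z1 - z0) \<bullet> (zd1 - zd0)) = - 2 * ((Tz1 - Tz0) \<bullet> (z1 - z0)) - 2 * ((z1 - z0) \<bullet> (e1 *\<^sub>R z1 - e0 *\<^sub>R z0))"
    by (simp add: inner_diff_right inner_commute)
  also have "2 * ((z1 - z0) \<bullet> (e1 *\<^sub>R z1 - e0 *\<^sub>R z0)) = (e1+e0) * (norm (z1-z0))\<^sup>2 + (e1-e0)*((norm z1)\<^sup>2 - (norm z0)\<^sup>2)"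
    by (rule key_id)
  finally have eq: "2 * ((z1 - z0) \<bullet> (zd1 - zd0)) = - 2 * ((Tz1 - Tz0) \<bullet> (z1 - z0)) - ((e1+e0) * (norm (z1-z0))\<^sup>2 + (e1-e0)*((norm z1)\<^sup>2 - (norm z0)\<^sup>2))" .
  have "(e1 + e0) * ((norm (z1 - z0))\<^sup>2 + (e1 - e0) * Gam)
       + (2 * ((z1 - z0) \<bullet> (zd1 - zd0)) + ((d1 - d0) * Gam + (e1 - e0) * ((norm z1)\<^sup>2 - (norm z0)\<^sup>2)))
     = Gam * ((e1^2 + d1) - (e0^2 + d0)) - 2 * ((Tz1 - Tz0) \<bullet> (z1 - z0))"
    unfolding eq by (simp add: algebra_simps power2_eq_square)
  also have "\<dots> \<le> 0"
  proof -
    have "Gam * ((e1^2 + d1) - (e0^2 + d0)) \<le> 0" using assms(4,5) by (simp add: mult_nonneg_nonpos)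
    then show ?thesis using assms(3) by linarith
  qed
  finally have "(e1 + e0) * ((norm (z1 - z0))\<^sup>2 + (e1 - e0) * Gam)
       + (2 * ((z1 - z0) \<bullet> (zd1 - zd0)) + ((d1 - d0) * Gam + (e1 - e0) * ((norm z1)\<^sup>2 - (norm z0)\<^sup>2))) \<le> 0" .
  then have "E * ((e1 + e0) * ((norm (z1 - z0))\<^sup>2 + (e1 - e0) * Gam)
       + (2 * ((z1 - z0) \<bullet> (zd1 - zd0)) + ((d1 - d0) * Gam + (e1 - e0) * ((norm z1)\<^sup>2 - (norm z0)\<^sup>2)))) \<le> 0"
    using assms(6) by (simp add: mult_nonneg_nonpos)
  then show ?thesis by (simp add: distrib_left)
qed



lemma scalar_final:
  fixes sa \<alpha> \<epsilon> en vv n R K q :: real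
  assumes sa: "sa > 0" "\<alpha> = sa^2" and e: "\<epsilon> > 0" "\<epsilon> \<le> sa/4"
    and nn: "en \<ge> 0" "vv \<ge> 0" "n \<ge> 0" "R \<ge> 0" "K \<ge> 0" "q > 0" "q \<le> 1"
    and h1: "sa*en \<le> vv + \<epsilon>*en" and h2: "vv^2 \<le> K*q + \<epsilon>^2*n^2" and h3: "n \<le> R + en"
  shows "en^2 \<le> (4/\<alpha>)*(K + (R + (4/sa)*(sqrt K + sa*R/4))^2) * (q + \<epsilon>^2)"
proof -
  have "vv^2 \<le> (sqrt K + \<epsilon>*n)^2"
  proof -
    have "K*q \<le> K" using nn by (simp add: mult_left_le)
    moreover have "(sqrt K)^2 = K" using nn by simp
    moreover have "0 \<le> 2 * sqrt K * (\<epsilon> * n)" using nn e by simp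
    moreover have "(\<epsilon>*n)^2 = \<epsilon>^2*n^2" by (simp add: power_mult_distrib)
    ultimately have "K*q + \<epsilon>^2*n^2 \<le> (sqrt K)^2 + (\<epsilon>*n)^2 + 2 * sqrt K * (\<epsilon> * n)"
      by linarith
    then show ?thesis using h2 by (simp add: power2_sum)
  qed
  then have vv: "vv \<le> sqrt K + \<epsilon>*n" by (rule power2_le_imp_le) (use nn e in simp)
  have "\<epsilon>*en \<le> (sa/4)*en" using e nn by (intro mult_right_mono) auto
  then have en1: "sa*en \<le> 2* vv" using h1 nn sa by linarith
  have "\<epsilon>*n \<le> \<epsilon>*R + \<epsilon>*en" using h3 e by (metis distrib_left mult_left_mono less_eq_real_def)
  then have "sa*en \<le> sqrt K + \<epsilon>*R + 2*(\<epsilon>*en)" using h1 vv by linarith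
  also have "2*(\<epsilon>*en) \<le> (sa/2)*en" using \<open>\<epsilon>*en \<le> (sa/4)*en\<close> by linarith
  finally have "(sa/2)*en \<le> sqrt K + \<epsilon>*R" by linarith
  moreover have "\<epsilon>*R \<le> (sa/4)*R" using e nn by (intro mult_right_mono) auto
  ultimately have "(sa/2)*en \<le> sqrt K + (sa/4)*R" by linarith
  then have "en \<le> (2/sa)*(sqrt K + sa*R/4)" using sa by (simp add: field_simps)
  also have "\<dots> \<le> (4/sa)*(sqrt K + sa*R/4)" using sa nn by (intro mult_right_mono) (auto simp: field_simps)
  finally have enb: "en \<le> (4/sa)*(sqrt K + sa*R/4)" .
  define N where "N = R + (4/sa)*(sqrt K + sa*R/4)"
  have nN: "n \<le> N" unfolding N_def using h3 enb by linarith
  have N0: "N \<ge> 0" using nn nN by linarith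
  have "en \<le> 2* vv/sa" using en1 sa by (simp add: field_simps)
  then have "en^2 \<le> (2* vv/sa)^2" using nn by (intro power_mono) auto
  also have "\<dots> = (4/\<alpha>)* vv^2" using sa by (simp add: power_divide power_mult_distrib)
  also have "\<dots> \<le> (4/\<alpha>)*(K*q + \<epsilon>^2*N^2)"
  proof -
    have "n^2 \<le> N^2" using nN nn by (intro power_mono) auto
    then have "\<epsilon>^2*n^2 \<le> \<epsilon>^2*N^2" by (simp add: mult_left_mono)
    then show ?thesis using h2 sa by (intro mult_left_mono) auto
  qed
  also have "\<dots> \<le> (4/\<alpha>)*((K + N^2) * (q + \<epsilon>^2))"
  proof -
    have "K*q \<le> (K + N^2)*q" using nn by (simp add: mult_right_mono)
    moreover have "\<epsilon>^2*N^2 \<le> \<epsilon>^2*(K + N^2)" using nn by (intro mult_left_mono) auto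
    then have "\<epsilon>^2*N^2 \<le> (K + N^2)*\<epsilon>^2" by (simp add: mult.commute)
    ultimately have "K*q + \<epsilon>^2*N^2 \<le> (K + N^2) * (q + \<epsilon>^2)" by (simp add: distrib_left)
    then show ?thesis using sa by (intro mult_left_mono) auto
  qed
  finally show ?thesis unfolding N_def by (simp only: mult.assoc)
qed



theorem corollary4p7:
  fixes f :: "'a::{real_inner,complete_space} \<Rightarrow> real"
    and gf :: "'a \<Rightarrow> 'a"
    and A :: "'a \<Rightarrow> 'b::{real_inner,complete_space}"
    and Astar :: "'b \<Rightarrow> 'a"
    and b :: 'b
    and eps eps' eps'' :: "real \<Rightarrow> real"
    and t0 tp :: real
    and x xt :: "real \<Rightarrow> 'a"
    and lam lamt :: "real \<Rightarrow> 'b"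
  assumes f_convex: "convex_on UNIV f"
    and f_grad: "\<And>z. (f has_derivative (\<lambda>h. gf z \<bullet> h)) (at z)"
    and gf_cont: "continuous_on UNIV gf"
    and gf_lip: "\<And>B. bounded B \<Longrightarrow> \<exists>L. \<forall>u\<in>B. \<forall>v\<in>B. norm (gf u - gf v) \<le> L * norm (u - v)"
    and A_lin: "bounded_linear A"
    and A_adj: "\<And>u v. A u \<bullet> v = u \<bullet> Astar v"
    and t0_nonneg: "t0 \<ge> 0"
    and eps_pos: "\<And>t. t \<ge> t0 \<Longrightarrow> eps t > 0"
    and eps_d1: "\<And>t. t \<ge> t0 \<Longrightarrow> (eps has_real_derivative eps' t) (at t within {t0..})"
    and eps_d2: "\<And>t. t \<ge> t0 \<Longrightarrow> (eps' has_real_derivative eps'' t) (at t within {t0..})"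
    and eps''_cont: "continuous_on {t0..} eps''"
    and eps_lim: "(eps \<longlongrightarrow> 0) at_top"
    and SM_nonempty: "opt_sol f A b \<times> lagrange_mult f gf A Astar b \<noteq> {}"
    and sol_x: "\<And>t. t \<ge> t0 \<Longrightarrow>
        (x has_vector_derivative (- (gf (x t) + Astar (lam t) + eps t *\<^sub>R x t))) (at t within {t0..})"
    and sol_lam: "\<And>t. t \<ge> t0 \<Longrightarrow>
        (lam has_vector_derivative (- (b - A (x t) + eps t *\<^sub>R lam t))) (at t within {t0..})"
    and zero_Tt: "\<And>t. t \<ge> t0 \<Longrightarrow>
        opT gf A Astar b (xt t, lamt t) + eps t *\<^sub>R (xt t, lamt t) = 0"
    and tp_ge: "tp \<ge> t0"
    and eps_cond1: "\<And>t. t \<ge> tp \<Longrightarrow> (eps t)\<^sup>2 + eps' t \<ge> 0"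
    and eps_cond2: "\<And>t. t \<ge> tp \<Longrightarrow> 2 * eps t * eps' t + eps'' t \<le> 0"
    and T_strong: "\<exists>\<alpha>>0. \<forall>z w. (norm (opT gf A Astar b z - opT gf A Astar b w))\<^sup>2
                                   \<ge> \<alpha> * (norm (z - w))\<^sup>2"
  shows "(\<lambda>t. (norm ((x t, lam t) - (xt t, lamt t)))\<^sup>2)
           \<in> O[at_top](\<lambda>t. exp (-2 * integral {t0..t} eps) + (eps t)\<^sup>2)"
proof -
  define Tm where "Tm = opT gf A Astar b"
  define z where "z t = (x t, lam t)" for t
  define zt where "zt t = (xt t, lamt t)" for t
  define zd where "zd t = - (Tm (z t) + eps t *\<^sub>R z t)" for t
  define F where "F u = integral {t0..u} eps" for u
  define G where "G u = integral {t0..u} (\<lambda>r. (norm (z r))\<^sup>2)" for u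
  have Alin: "linear A" using A_lin bounded_linear.linear by blast
  have mono: "\<And>u w. (Tm u - Tm w) \<bullet> (u - w) \<ge> 0"
    unfolding Tm_def by (rule T_mono[OF grad_mono[OF f_convex f_grad] Alin A_adj])
  have zderw: "(z has_vector_derivative zd s) (at s within {t0..})" if s: "s \<ge> t0" for s
  proof -
    have "(z has_vector_derivative (-(gf (x s) + Astar (lam s) + eps s *\<^sub>R x s), -(b - A (x s) + eps s *\<^sub>R lam s))) (at s within {t0..})"
      unfolding z_def using sol_x sol_lam s by (intro has_vector_derivative_Pair) auto
    moreover have "(-(gf (x s) + Astar (lam s) + eps s *\<^sub>R x s), -(b - A (x s) + eps s *\<^sub>R lam s)) = zd s"
      unfolding zd_def Tm_def z_def opT_def by simp
    ultimately show ?thesis by simp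
  qed
  have zder: "(z has_vector_derivative zd s) (at s)" if s: "s > t0" for s
    using within_to_at[OF zderw s] s by simp
  have zcont: "continuous_on {t0..} z"
    unfolding continuous_on_eq_continuous_within
    using zderw has_vector_derivative_continuous by fastforce
  have epscont: "continuous_on {t0..} eps"
    by (rule DERIV_continuous_on[OF eps_d1]) simp
  have epsd: "DERIV eps s :> eps' s" if "s > t0" for s
    using within_to_at_real[OF eps_d1 that] that by simp
  have eps'd: "DERIV eps' s :> eps'' s" if "s > t0" for s
    using within_to_at_real[OF eps_d2 that] that by simp
  have Fd: "DERIV F s :> eps s" if "s > t0" for s
    unfolding F_def by (rule integral_deriv_at[OF epscont that])
  have ncont: "continuous_on {t0..} (\<lambda>r. (norm (z r))\<^sup>2)"
    by (intro continuous_intros zcont)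
  have Gd: "DERIV G s :> (norm (z s))\<^sup>2" if "s > t0" for s
    unfolding G_def by (rule integral_deriv_at[OF ncont that])
  have phi_decr: "eps v ^ 2 + eps' v \<le> eps u ^ 2 + eps' u" if "tp < u" "u \<le> v" for u v
  proof (rule decr_open[where a=tp and g="\<lambda>s. eps s ^ 2 + eps' s" and g'="\<lambda>s. 2 * eps s * eps' s + eps'' s"])
    fix s assume s: "s > tp"
    then have "s > t0" using tp_ge by linarith
    show "((\<lambda>s. eps s ^ 2 + eps' s) has_real_derivative 2 * eps s * eps' s + eps'' s) (at s)"
      using epsd[OF \<open>s > t0\<close>] eps'd[OF \<open>s > t0\<close>]
      by (auto intro!: derivative_eq_intros)
    show "2 * eps s * eps' s + eps'' s \<le> 0" using eps_cond2 s by simp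
  qed (use that in auto)
  have G_mono: "G u \<le> G v" if "t0 < u" "u \<le> v" for u v
  proof -
    have "- G v \<le> - G u"
    proof (rule decr_open[where a=t0 and g="\<lambda>s. - G s" and g'="\<lambda>s. - (norm (z s))\<^sup>2"])
      fix s assume s: "s > t0"
      show "((\<lambda>s. - G s) has_real_derivative - (norm (z s))\<^sup>2) (at s)"
        using Gd[OF s] by (auto intro!: derivative_eq_intros)
    qed (use that in auto)
    then show ?thesis by simp
  qed
  define P where "P s = exp (F s + F s) * ((norm (zd s))\<^sup>2 + eps' s * (norm (z s))\<^sup>2)" for s
  define t1 where "t1 = tp + 1"
  have t1: "t1 > tp" "t1 > t0" using tp_ge unfolding t1_def by auto
  define Psi where "Psi h s = exp (F (s+h) + F s) * ((norm ((z (s+h) - z s) /\<^sub>R h))\<^sup>2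
      + ((eps (s+h) - eps s)/h) * ((G (s+h) - G s)/h))" for h s
  have step: "Psi h t \<le> Psi h t1" if h: "h > 0" and t: "t \<ge> t1" for h t
  proof -
    define E where "E s = exp (F (s+h) + F s)" for s
    define N where "N s = (norm (z (s+h) - z s))\<^sup>2" for s
    define Del where "Del s = eps (s+h) - eps s" for s
    define Gam where "Gam s = G (s+h) - G s" for s
    define Phi where "Phi s = E s * (N s + Del s * Gam s)" for s
    define dE where "dE s = E s * (eps (s+h) + eps s)" for s
    define dN where "dN s = 2 * ((z (s+h) - z s) \<bullet> (zd (s+h) - zd s))" for s
    define dDel where "dDel s = eps' (s+h) - eps' s" for s
    define dGam where "dGam s = (norm (z (s+h)))\<^sup>2 - (norm (z s))\<^sup>2" for s
    have "Phi t \<le> Phi t1"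
    proof (rule decr_open[where a=tp and g=Phi and g'="\<lambda>s. dE s * (N s + Del s * Gam s) + (dN s + (dDel s * Gam s + dGam s * Del s)) * E s"])
      fix s assume s: "s > tp"
      then have s0: "s > t0" "s + h > t0" using tp_ge h by auto
      have 1: "DERIV E s :> dE s"
        unfolding E_def dE_def
        using Fd[OF s0(2), unfolded DERIV_shift] Fd[OF s0(1)] by (auto intro!: derivative_eq_intros)
      have dD: "((\<lambda>s. z (s+h) - z s) has_vector_derivative (zd (s+h) - zd s)) (at s)"
        using vshift[OF zder[OF s0(2)]] zder[OF s0(1)] by (rule has_vector_derivative_diff)
      have 2: "DERIV N s :> dN s"
        unfolding N_def dN_def using deriv_norm2[OF dD] by simp
      have 3: "DERIV Del s :> dDel s"
        unfolding Del_def dDel_def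
        using epsd[OF s0(2), unfolded DERIV_shift] epsd[OF s0(1)] by (auto intro!: derivative_eq_intros)
      have 4: "DERIV Gam s :> dGam s"
        unfolding Gam_def dGam_def
        using Gd[OF s0(2), unfolded DERIV_shift] Gd[OF s0(1)] by (auto intro!: derivative_eq_intros)
      show "DERIV Phi s :> dE s * (N s + Del s * Gam s) + (dN s + (dDel s * Gam s + dGam s * Del s)) * E s"
        unfolding Phi_def by (intro DERIV_mult DERIV_add 1 2 3 4)
      have Gam0: "Gam s \<ge> 0" unfolding Gam_def using G_mono[of s "s+h"] s0 h by simp
      have E0: "E s > 0" unfolding E_def by simp
      have mi: "E s * ((eps (s+h) + eps s) * ((norm (z (s+h) - z s))\<^sup>2 + (eps (s+h) - eps s) * Gam s))
       + E s * (2 * ((z (s+h) - z s) \<bullet> (zd (s+h) - zd s)) + ((eps' (s+h) - eps' s) * Gam s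
         + (eps (s+h) - eps s) * ((norm (z (s+h)))\<^sup>2 - (norm (z s))\<^sup>2))) \<le> 0"
        by (rule main_ineq[OF zd_def zd_def mono phi_decr Gam0 E0]) (use s h in auto)
      show "dE s * (N s + Del s * Gam s) + (dN s + (dDel s * Gam s + dGam s * Del s)) * E s \<le> 0"
        using mi unfolding dE_def N_def Del_def dN_def dDel_def dGam_def
        by (simp add: algebra_simps)
    qed (use t t1 in auto)
    moreover have "Psi h s = Phi s / h\<^sup>2" for s
    proof -
      have nq: "norm ((z (s+h) - z s) /\<^sub>R h) = norm (z (s+h) - z s) / h" using h by (simp add: divide_inverse mult.commute)
      show ?thesis unfolding Psi_def Phi_def E_def N_def Del_def Gam_def nq using h
        by (simp add: field_simps power2_eq_square)
    qed
    ultimately show ?thesis using h by (simp add: divide_right_mono)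
  qed
  have lim: "((\<lambda>h. Psi h s) \<longlongrightarrow> P s) (at_right 0)" if s: "s > t0" for s
  proof -
    have q1: "((\<lambda>h. (z (s+h) - z s) /\<^sub>R h) \<longlongrightarrow> zd s) (at 0)" by (rule diffquot[OF zder[OF s]])
    have q2: "((\<lambda>h. (eps (s+h) - eps s) / h) \<longlongrightarrow> eps' s) (at 0)" using epsd[OF s] by (simp add: DERIV_def)
    have q3: "((\<lambda>h. (G (s+h) - G s) / h) \<longlongrightarrow> (norm (z s))\<^sup>2) (at 0)" using Gd[OF s] by (simp add: DERIV_def)
    have q4: "((\<lambda>h. F (s+h)) \<longlongrightarrow> F s) (at 0)"
      using LIM_offset_zero[where f=F and a=s and L="F s"] DERIV_isCont[OF Fd[OF s]] by (simp add: isCont_def)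
    have "((\<lambda>h. Psi h s) \<longlongrightarrow> P s) (at 0)"
      unfolding Psi_def P_def by (intro tendsto_intros q1 q2 q3 q4)
    then show ?thesis by (rule tendsto_mono[OF at_le, rotated]) simp
  qed
  have Pbound: "P t \<le> P t1" if t: "t \<ge> t1" for t
  proof (rule tendsto_le[OF _ lim lim])
    show "at_right (0::real) \<noteq> bot" by simp
    show "\<forall>\<^sub>F h in at_right 0. Psi h t \<le> Psi h t1"
      using eventually_at_right_less[of "0::real"] by (rule eventually_mono) (use step t in auto)
  qed (use t t1 in auto)
  obtain \<alpha> where \<alpha>: "\<alpha> > 0" "\<And>u w. (norm (Tm u - Tm w))\<^sup>2 \<ge> \<alpha> * (norm (u - w))\<^sup>2"
    using T_strong unfolding Tm_def by blast
  obtain zs where zs: "Tm zs = 0"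
  proof -
    from SM_nonempty obtain x1 l1 where "x1 \<in> opt_sol f A b" "l1 \<in> lagrange_mult f gf A Astar b" by auto
    then obtain x' where "x' \<in> opt_sol f A b" "gf x' + Astar l1 = 0" unfolding lagrange_mult_def by auto
    then have "Tm (x', l1) = 0" unfolding Tm_def opT_def opt_sol_def by (simp add: zero_prod_def)
    then show ?thesis using that by blast
  qed
  define R where "R = norm zs"
  have Tzt: "Tm (zt t) = - (eps t *\<^sub>R zt t)" if "t \<ge> t0" for t
  proof -
    have "Tm (zt t) + eps t *\<^sub>R zt t = 0" using zero_Tt[OF that] unfolding Tm_def zt_def .
    then show ?thesis by (simp only: eq_neg_iff_add_eq_0)
  qed
  have zt_bd: "norm (zt t) \<le> R" if t: "t \<ge> t0" for t
  proof -
    have "(Tm (zt t) - Tm zs) \<bullet> (zt t - zs) \<ge> 0" by (rule mono)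
    then have "eps t * (zt t \<bullet> (zt t - zs)) \<le> 0" unfolding Tzt[OF t] zs by simp
    then have "zt t \<bullet> (zt t - zs) \<le> 0" using eps_pos[OF t] by (simp add: mult_le_0_iff)
    then have "(norm (zt t))\<^sup>2 \<le> zt t \<bullet> zs" by (simp add: inner_diff_right power2_norm_eq_inner)
    also have "\<dots> \<le> norm (zt t) * R" unfolding R_def by (rule norm_cauchy_schwarz)
    finally have "norm (zt t) * norm (zt t) \<le> norm (zt t) * R" by (simp add: power2_eq_square)
    then show ?thesis
    proof (cases "norm (zt t) = 0")
      case True then show ?thesis unfolding R_def by simp
    next
      case False then have "norm (zt t) > 0" by simp
      then show ?thesis using \<open>norm (zt t) * norm (zt t) \<le> norm (zt t) * R\<close> by simp
    qed
  qed
  have Fnn: "F t \<ge> 0" if "t \<ge> t0" for t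
    unfolding F_def
    by (rule integral_nonneg) (auto intro!: integrable_continuous_real continuous_on_subset[OF epscont] less_imp_le[OF eps_pos])
  define sa where "sa = sqrt \<alpha>"
  have sa: "sa > 0" "\<alpha> = sa^2" unfolding sa_def using \<alpha> by auto
  define K where "K = max (P t1) 0"
  define C where "C = (4/\<alpha>)*(K + (R + (4/sa)*(sqrt K + sa*R/4))^2)"
  have ev1: "eventually (\<lambda>t. eps t < sa/4) at_top"
    using order_tendstoD(2)[OF eps_lim, of "sa/4"] sa by simp
  have ev2: "eventually (\<lambda>t. t \<ge> t1) at_top" by (rule eventually_ge_at_top)
  have "eventually (\<lambda>t. norm ((norm ((x t, lam t) - (xt t, lamt t)))\<^sup>2)
           \<le> C * norm (exp (-2 * integral {t0..t} eps) + (eps t)\<^sup>2)) at_top"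
    using ev1 ev2
  proof eventually_elim
    case (elim t)
    have t: "t \<ge> t1" "t > t0" "t \<ge> tp" using elim t1 by auto
    define E2 where "E2 = exp (F t + F t)"
    have E2: "E2 \<ge> 1" unfolding E2_def using Fnn[of t] t by simp
    have q: "exp (-2 * integral {t0..t} eps) = 1 / E2"
      unfolding E2_def F_def by (simp add: exp_minus exp_add[symmetric] inverse_eq_divide)
    have PK: "E2 * ((norm (zd t))\<^sup>2 + eps' t * (norm (z t))\<^sup>2) \<le> K"
      using Pbound[OF t(1)] unfolding K_def P_def E2_def by linarith
    have h2: "(norm (zd t))\<^sup>2 \<le> K * (1/E2) + (eps t)\<^sup>2 * (norm (z t))\<^sup>2"
    proof -
      have "(norm (zd t))\<^sup>2 + eps' t * (norm (z t))\<^sup>2 \<le> K / E2" using PK E2 by (simp add: field_simps)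
      moreover have "- eps' t * (norm (z t))\<^sup>2 \<le> (eps t)\<^sup>2 * (norm (z t))\<^sup>2"
        using eps_cond1[OF t(3)] by (intro mult_right_mono) auto
      ultimately show ?thesis by simp
    qed
    have h1: "sa * norm (z t - zt t) \<le> norm (zd t) + eps t * norm (z t - zt t)"
    proof -
      have "Tm (z t) - Tm (zt t) = - (zd t + eps t *\<^sub>R (z t - zt t))"
        unfolding Tzt[OF less_imp_le[OF t(2)]] zd_def by (simp add: algebra_simps)
      then have "norm (Tm (z t) - Tm (zt t)) = norm (zd t + eps t *\<^sub>R (z t - zt t))"
        by (simp only: norm_minus_cancel)
      then have "norm (Tm (z t) - Tm (zt t)) \<le> norm (zd t) + eps t * norm (z t - zt t)"
        using norm_triangle_ineq[of "zd t" "eps t *\<^sub>R (z t - zt t)"] eps_pos[of t] t by simp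
      moreover have "sa * norm (z t - zt t) \<le> norm (Tm (z t) - Tm (zt t))"
      proof (rule power2_le_imp_le)
        show "(sa * norm (z t - zt t))\<^sup>2 \<le> (norm (Tm (z t) - Tm (zt t)))\<^sup>2"
          using \<alpha>(2)[of "z t" "zt t"] sa by (simp add: power_mult_distrib)
      qed simp
      ultimately show ?thesis by linarith
    qed
    have h3: "norm (z t) \<le> R + norm (z t - zt t)"
      using norm_triangle_ineq[of "zt t" "z t - zt t"] zt_bd[of t] t by simp
    have "(norm (z t - zt t))\<^sup>2 \<le> C * (1/E2 + (eps t)\<^sup>2)"
      unfolding C_def
      by (rule scalar_final[OF sa eps_pos[of t] _ _ _ _ _ _ _ _ h1 h2 h3])
         (use t elim E2 in \<open>auto simp: K_def R_def\<close>)
    moreover have "z t - zt t = (x t, lam t) - (xt t, lamt t)" unfolding z_def zt_def by simp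
    moreover have "1/E2 + (eps t)\<^sup>2 \<ge> 0" using E2 by simp
    ultimately show ?case unfolding q by simp
  qed
  then show ?thesis by (rule bigoI)

qed

end
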